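(* Let $d\ge 2$ and for $x,y,z\in\mathbb S^{d-1}$ let $A^2(x,y,z)$ be the square of the area of the triangle with vertices $x,y,z$. Then the uniform surface measure $\sigma$ maximizes $I_{A^2}(\mu)=\iiint A^2(x,y,z)\,d\mu(x)d\mu(y)d\mu(z)$ over $\mu\in\mathcal P(\mathbb S^{d-1})$. Moreover, any balanced isotropic measure $\mu\in\mathcal P(\mathbb S^{d-1})$ maximizes $I_{A^2}$.
   Context: $\mathbb S^{d-1}$ is the unit sphere in $\mathbb R^d$, $\mathcal P(\mathbb S^{d-1})$ the Borel probability measures on it, and $\sigma$ the normalized surface measure. $\mu$ is isotropic if $\int xx^T\,d\mu(x)=\frac1d I_d$, and balanced if $\int x\,d\mu(x)=0$. *)

theory Defs
  imports "HOL-Probability.Probability"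
begin

text \<open>Squared area of the triangle with vertices x, y, z in a Euclidean space:
  with u = y - x, v = z - x, the area is (1/2) sqrt(|u|^2 |v|^2 - (u.v)^2)
  (half the square root of the Gram determinant).\<close>
definition tri_area_sq :: "'a::euclidean_space \<Rightarrow> 'a \<Rightarrow> 'a \<Rightarrow> real" where
  "tri_area_sq x y z =
     ((norm (y - x))\<^sup>2 * (norm (z - x))\<^sup>2 - ((y - x) \<bullet> (z - x))\<^sup>2) / 4"

definition sphere_prob :: "'a::euclidean_space measure \<Rightarrow> bool" where
  "sphere_prob \<mu> \<longleftrightarrow> prob_space \<mu> \<and> sets \<mu> = sets borel \<and>
     emeasure \<mu> (sphere 0 1) = 1"

text \<open>Normalized surface measure on the sphere: push-forward of the uniform
  probability measure on the unit ball under radial projection x \<mapsto> x/|x|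
  (cone-measure construction).\<close>
definition sphere_sigma :: "'a::euclidean_space measure" where
  "sphere_sigma = distr (uniform_measure lborel (ball 0 1)) borel (\<lambda>x. x /\<^sub>R norm x)"

definition I_A2 :: "'a::euclidean_space measure \<Rightarrow> real" where
  "I_A2 \<mu> = (\<integral>x. (\<integral>y. (\<integral>z. tri_area_sq x y z \<partial>\<mu>) \<partial>\<mu>) \<partial>\<mu>)"

definition balanced :: "'a::euclidean_space measure \<Rightarrow> bool" where
  "balanced \<mu> \<longleftrightarrow> (\<integral>x. x \<partial>\<mu>) = 0"

definition isotropic :: "'a::euclidean_space measure \<Rightarrow> bool" where
  "isotropic \<mu> \<longleftrightarrow> (\<forall>i\<in>Basis. \<forall>j\<in>Basis.
     (\<integral>x. (x \<bullet> i) * (x \<bullet> j) \<partial>\<mu>) = (if i = j then 1 / real DIM('a) else 0))"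

end

theory Submission
  imports Defs
begin


definition mvec :: "'a::euclidean_space measure \<Rightarrow> 'a" where
  "mvec M = (\<integral>z. z \<partial>M)"
definition Bm :: "'a::euclidean_space measure \<Rightarrow> 'a \<Rightarrow> 'a \<Rightarrow> real" where
  "Bm M u v = (\<integral>z. (z \<bullet> u) * (z \<bullet> v) \<partial>M)"
definition Lm :: "'a::euclidean_space measure \<Rightarrow> 'a \<Rightarrow> 'a" where
  "Lm M u = (\<Sum>j\<in>Basis. Bm M u j *\<^sub>R j)"
definition Fm :: "'a::euclidean_space measure \<Rightarrow> real" where
  "Fm M = (\<Sum>j\<in>Basis. Lm M j \<bullet> Lm M j)"

locale sphp = prob_space M for M :: "'a::euclidean_space measure" +
  assumes sets_M[measurable_cong]: "sets M = sets borel"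
  and sph: "emeasure M (sphere 0 1) = 1"
begin

lemma AE_sph: "AE z in M. norm z = 1"
proof -
  have "prob (sphere 0 1) = 1" using sph by (simp add: emeasure_eq_measure)
  then have "AE z in M. z \<in> sphere 0 1" by (rule AE_prob_1)
  then show ?thesis by simp
qed

lemma intg_bdd:
  fixes f :: "'a \<Rightarrow> 'b::{banach,second_countable_topology}"
  assumes "f \<in> borel_measurable borel" "\<And>z. norm z = 1 \<Longrightarrow> norm (f z) \<le> B"
  shows "integrable M f"
proof (rule integrable_const_bound[where B=B])
  show "AE x in M. norm (f x) \<le> B" using AE_sph by eventually_elim (rule assms(2))
  show "f \<in> borel_measurable M" using assms(1) by (simp add: measurable_cong_sets[OF sets_M refl])
qed

lemma intg_id: "integrable M (\<lambda>z. z)"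
  by (rule intg_bdd[where B=1]) auto

lemma intg_lin: "integrable M (\<lambda>z. z \<bullet> u)"
  by (rule intg_bdd[where B="norm u"]) (auto intro: order_trans[OF Cauchy_Schwarz_ineq2])

lemma intg_quad: "integrable M (\<lambda>z. (z \<bullet> u) * (z \<bullet> v))"
proof (rule intg_bdd[where B="norm u * norm v"])
  fix z :: 'a assume "norm z = 1"
  then show "norm ((z \<bullet> u) * (z \<bullet> v)) \<le> norm u * norm v"
    using Cauchy_Schwarz_ineq2[of z u] Cauchy_Schwarz_ineq2[of z v]
    by (simp add: abs_mult mult_mono)
qed auto

lemma int_lin: "(\<integral>z. z \<bullet> u \<partial>M) = mvec M \<bullet> u"
  unfolding mvec_def using intg_id by simp

lemma Bm_sym: "Bm M u v = Bm M v u"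
  unfolding Bm_def by (simp add: mult.commute)

lemma Bm_L: "Bm M u v = Lm M u \<bullet> v"
proof -
  have "(\<lambda>z. (z \<bullet> u) * (z \<bullet> v)) = (\<lambda>z. \<Sum>j\<in>Basis. (v \<bullet> j) * ((z \<bullet> u) * (z \<bullet> j)))"
    by (auto simp: euclidean_inner[of _ v] sum_distrib_left mult_ac intro!: sum.cong)
  then have "Bm M u v = (\<Sum>j\<in>Basis. (v \<bullet> j) * Bm M u j)"
    unfolding Bm_def using intg_quad by (simp add: integral_sum)
  also have "\<dots> = Lm M u \<bullet> v"
    unfolding Lm_def inner_sum_left inner_scaleR_left by (simp add: mult.commute inner_commute)
  finally show ?thesis .
qed

lemma Bm_sum: "Bm M u v = (\<Sum>j\<in>Basis. (u \<bullet> j) * (v \<bullet> Lm M j))"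
proof -
  have "Bm M u v = Lm M v \<bullet> u" by (subst Bm_sym) (rule Bm_L)
  also have "\<dots> = (\<Sum>j\<in>Basis. (u \<bullet> j) * Bm M j v)"
    unfolding Lm_def inner_sum_left inner_scaleR_left
    by (intro sum.cong refl) (metis Bm_sym inner_commute mult.commute)
  also have "\<dots> = (\<Sum>j\<in>Basis. (u \<bullet> j) * (v \<bullet> Lm M j))"
    by (simp add: Bm_L inner_commute)
  finally show ?thesis .
qed

lemma intg_BB: "integrable M (\<lambda>z. Bm M z z)"
  unfolding Bm_sum[abs_def] using intg_quad by simp

lemma int_BB: "(\<integral>z. Bm M z z \<partial>M) = Fm M"
proof -
  have e: "(\<lambda>z. Bm M z z) = (\<lambda>z. \<Sum>j\<in>Basis. (z \<bullet> j) * (z \<bullet> Lm M j))"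
    by (rule ext) (rule Bm_sum)
  have "(\<integral>z. Bm M z z \<partial>M) = (\<Sum>j\<in>Basis. Bm M j (Lm M j))"
    unfolding e by (simp add: intg_quad Bm_def)
  then show ?thesis unfolding Fm_def by (simp add: Bm_L)
qed

lemma int_main:
  "(\<integral>z. c0 + z \<bullet> p + k1 * ((z \<bullet> u1) * (z \<bullet> v1)) + k2 * ((z \<bullet> u2) * (z \<bullet> v2))
        + k3 * ((z \<bullet> u3) * (z \<bullet> v3)) + k4 * Bm M z z \<partial>M)
   = c0 + mvec M \<bullet> p + k1 * Bm M u1 v1 + k2 * Bm M u2 v2 + k3 * Bm M u3 v3 + k4 * Fm M"
  using intg_quad intg_lin intg_BB
  by (simp add: int_lin int_BB Bm_def[symmetric] prob_space)

lemma meas_BB[measurable]: "(\<lambda>z. Bm M z z) \<in> borel_measurable borel"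
proof -
  have e: "(\<lambda>z. Bm M z z) = (\<lambda>z. \<Sum>j\<in>Basis. (z \<bullet> j) * (z \<bullet> Lm M j))"
    by (rule ext) (rule Bm_sum)
  show ?thesis unfolding e by measurable
qed

lemma tri_eq:
  assumes "norm x = 1" "norm y = 1" "norm z = 1"
  shows "tri_area_sq x y z =
    (3 - (x \<bullet> y)^2 - 2 * (x \<bullet> y)) / 4 + z \<bullet> (((x \<bullet> y - 1) / 2) *\<^sub>R (x + y))
    + (-1/4) * ((z \<bullet> y) * (z \<bullet> y)) + (-1/4) * ((z \<bullet> x) * (z \<bullet> x))
    + (1/2) * ((z \<bullet> x) * (z \<bullet> y)) + 0 * Bm M z z"
proof -
  have xx: "x \<bullet> x = 1" "y \<bullet> y = 1" "z \<bullet> z = 1" using assms by (simp_all add: norm_eq_1)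
  show ?thesis unfolding tri_area_sq_def power2_norm_eq_inner
    by (simp add: inner_diff_left inner_diff_right inner_add_right xx inner_commute[of y x] inner_commute[of x z] inner_commute[of y z]
        power2_eq_square field_simps)
qed

lemma meas_inner: "(\<lambda>y. \<integral>z. tri_area_sq x y z \<partial>M) \<in> borel_measurable M"
  unfolding tri_area_sq_def by measurable

lemma meas_outer: "(\<lambda>x. \<integral>y. \<integral>z. tri_area_sq x y z \<partial>M \<partial>M) \<in> borel_measurable M"
  unfolding tri_area_sq_def by measurable

lemma level_z:
  assumes "norm x = 1" "norm y = 1"
  shows "(\<integral>z. tri_area_sq x y z \<partial>M) =
    (3 - (x \<bullet> y)^2 - 2 * (x \<bullet> y)) / 4 + mvec M \<bullet> (((x \<bullet> y - 1) / 2) *\<^sub>R (x + y))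
    + (-1/4) * Bm M y y + (-1/4) * Bm M x x + (1/2) * Bm M x y + 0 * Fm M"
proof -
  have "(\<integral>z. tri_area_sq x y z \<partial>M) = (\<integral>z. (3 - (x \<bullet> y)^2 - 2 * (x \<bullet> y)) / 4 + z \<bullet> (((x \<bullet> y - 1) / 2) *\<^sub>R (x + y))
    + (-1/4) * ((z \<bullet> y) * (z \<bullet> y)) + (-1/4) * ((z \<bullet> x) * (z \<bullet> x))
    + (1/2) * ((z \<bullet> x) * (z \<bullet> y)) + 0 * Bm M z z \<partial>M)"
  proof (rule integral_cong_AE)
    show "AE z in M. tri_area_sq x y z = (3 - (x \<bullet> y)^2 - 2 * (x \<bullet> y)) / 4 + z \<bullet> (((x \<bullet> y - 1) / 2) *\<^sub>R (x + y))
    + (-1/4) * ((z \<bullet> y) * (z \<bullet> y)) + (-1/4) * ((z \<bullet> x) * (z \<bullet> x))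
    + (1/2) * ((z \<bullet> x) * (z \<bullet> y)) + 0 * Bm M z z"
      using AE_sph by eventually_elim (rule tri_eq[OF assms])
  qed (unfold tri_area_sq_def, measurable)
  also have "\<dots> = (3 - (x \<bullet> y)^2 - 2 * (x \<bullet> y)) / 4 + mvec M \<bullet> (((x \<bullet> y - 1) / 2) *\<^sub>R (x + y))
    + (-1/4) * Bm M y y + (-1/4) * Bm M x x + (1/2) * Bm M x y + 0 * Fm M"
    by (rule int_main)
  finally show ?thesis .
qed

definition "g1 x = (3/4 - (mvec M \<bullet> x)/2 - Bm M x x/4) + mvec M \<bullet> ((-1/2) *\<^sub>R x + ((mvec M \<bullet> x)/2) *\<^sub>R x - (1/2) *\<^sub>R mvec M + (1/2) *\<^sub>R Lm M x)
   + (-1/4) * Bm M x x + (1/2) * Bm M x (mvec M) + 0 * Bm M x x + (-1/4) * Fm M"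

lemma level_y:
  assumes "norm x = 1"
  shows "(\<integral>y. \<integral>z. tri_area_sq x y z \<partial>M \<partial>M) = g1 x"
proof -
  let ?m = "mvec M"
  have "(\<integral>y. \<integral>z. tri_area_sq x y z \<partial>M \<partial>M) = (\<integral>y. (3/4 - (?m \<bullet> x)/2 - Bm M x x/4) + y \<bullet> ((-1/2) *\<^sub>R x + ((?m \<bullet> x)/2) *\<^sub>R x - (1/2) *\<^sub>R ?m + (1/2) *\<^sub>R Lm M x)
   + (-1/4) * ((y \<bullet> x) * (y \<bullet> x)) + (1/2) * ((y \<bullet> x) * (y \<bullet> ?m)) + 0 * ((y \<bullet> x) * (y \<bullet> x)) + (-1/4) * Bm M y y \<partial>M)"
  proof (rule integral_cong_AE)
    show "AE y in M. (\<integral>z. tri_area_sq x y z \<partial>M) = (3/4 - (?m \<bullet> x)/2 - Bm M x x/4) + y \<bullet> ((-1/2) *\<^sub>R x + ((?m \<bullet> x)/2) *\<^sub>R x - (1/2) *\<^sub>R ?m + (1/2) *\<^sub>R Lm M x)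
   + (-1/4) * ((y \<bullet> x) * (y \<bullet> x)) + (1/2) * ((y \<bullet> x) * (y \<bullet> ?m)) + 0 * ((y \<bullet> x) * (y \<bullet> x)) + (-1/4) * Bm M y y"
      using AE_sph
    proof eventually_elim
      case (elim y)
      show ?case unfolding level_z[OF assms elim]
        by (simp add: Bm_L[of x y] inner_add_right inner_diff_right inner_commute[of x y]
            inner_commute[of "mvec M" y] inner_commute[of "Lm M x" y] power2_eq_square field_simps)
    qed
  qed (rule meas_inner, measurable)
  also have "\<dots> = g1 x" unfolding g1_def by (rule int_main)
  finally show ?thesis .
qed

lemma level_x:
  "I_A2 M = 3/4 - 3/4 * Fm M - 3/2 * (mvec M \<bullet> mvec M) + 3/2 * Bm M (mvec M) (mvec M)"
proof -
  let ?m = "mvec M"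
  have "I_A2 M = (\<integral>x. (3/4 - Fm M/4 - (?m \<bullet> ?m)/2) + x \<bullet> (Lm M ?m - ?m) + (1/2) * ((x \<bullet> ?m) * (x \<bullet> ?m))
      + 0 * ((x \<bullet> ?m) * (x \<bullet> ?m)) + 0 * ((x \<bullet> ?m) * (x \<bullet> ?m)) + (-1/2) * Bm M x x \<partial>M)"
    unfolding I_A2_def
  proof (rule integral_cong_AE)
    show "AE x in M. (\<integral>y. \<integral>z. tri_area_sq x y z \<partial>M \<partial>M) = (3/4 - Fm M/4 - (?m \<bullet> ?m)/2) + x \<bullet> (Lm M ?m - ?m) + (1/2) * ((x \<bullet> ?m) * (x \<bullet> ?m))
      + 0 * ((x \<bullet> ?m) * (x \<bullet> ?m)) + 0 * ((x \<bullet> ?m) * (x \<bullet> ?m)) + (-1/2) * Bm M x x"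
      using AE_sph
    proof eventually_elim
      case (elim x)
      have e1: "Bm M x ?m = x \<bullet> Lm M ?m" by (metis Bm_L Bm_sym inner_commute)
      have e2: "?m \<bullet> Lm M x = Bm M x ?m" by (simp add: Bm_L inner_commute)
      show ?case unfolding level_y[OF elim] g1_def
        by (simp add: e2 e1 inner_add_right inner_diff_right inner_commute[of "mvec M" x]
            power2_eq_square field_simps)
    qed
  qed (rule meas_outer, measurable)
  also have "\<dots> = 3/4 - 3/4 * Fm M - 3/2 * (?m \<bullet> ?m) + 3/2 * Bm M ?m ?m"
    by (subst int_main) (simp add: Bm_L[of ?m ?m] inner_diff_right inner_commute[of ?m "Lm M ?m"] field_simps)
  finally show ?thesis .
qed

lemma trace1: "(\<Sum>j\<in>Basis. Bm M j j) = 1"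
proof -
  have "(\<Sum>j\<in>Basis. Bm M j j) = (\<integral>z. (\<Sum>j\<in>Basis. (z \<bullet> j) * (z \<bullet> j)) \<partial>M)"
    unfolding Bm_def using intg_quad by simp
  also have "\<dots> = (\<integral>z. 1 \<partial>M)"
  proof (rule integral_cong_AE)
    show "AE z in M. (\<Sum>j\<in>Basis. (z \<bullet> j) * (z \<bullet> j)) = 1"
      using AE_sph by eventually_elim (simp add: euclidean_inner[symmetric] norm_eq_1)
  qed measurable
  finally show ?thesis by (simp add: prob_space)
qed

lemma Fm_ge: "1 / real DIM('a) \<le> Fm M"
proof -
  have "(\<Sum>j\<in>(Basis::'a set). Bm M j j)\<^sup>2 \<le> (\<Sum>j\<in>Basis. (Bm M j j)\<^sup>2) * card (Basis::'a set)"
    by (rule sum_squared_le_sum_of_squares)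
  then have 1: "1 / real DIM('a) \<le> (\<Sum>j\<in>(Basis::'a set). (Bm M j j)\<^sup>2)"
    by (simp add: trace1 field_simps)
  have "(Bm M j j)\<^sup>2 \<le> Lm M j \<bullet> Lm M j" if "j \<in> Basis" for j :: 'a
    using Cauchy_Schwarz_ineq[of "Lm M j" j] that by (simp add: Bm_L)
  then have "(\<Sum>j\<in>(Basis::'a set). (Bm M j j)\<^sup>2) \<le> Fm M"
    unfolding Fm_def by (rule sum_mono)
  with 1 show ?thesis by linarith
qed

lemma Q_le: "Bm M (mvec M) (mvec M) \<le> mvec M \<bullet> mvec M"
proof -
  let ?m = "mvec M"
  have "Bm M ?m ?m \<le> (\<integral>z. ?m \<bullet> ?m \<partial>M)"
    unfolding Bm_def
  proof (rule integral_mono_AE)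
    show "AE z in M. (z \<bullet> ?m) * (z \<bullet> ?m) \<le> ?m \<bullet> ?m"
      using AE_sph
    proof eventually_elim
      case (elim z)
      then show ?case using Cauchy_Schwarz_ineq[of z ?m] by (simp add: norm_eq_1 power2_eq_square)
    qed
  qed (auto simp: intg_quad)
  then show ?thesis by (simp add: prob_space)
qed

lemma I_le: "I_A2 M \<le> 3/4 - 3/4 * (1 / real DIM('a))"
  using level_x Fm_ge Q_le by linarith

lemma I_eq:
  assumes "balanced M" "isotropic M"
  shows "I_A2 M = 3/4 - 3/4 * (1 / real DIM('a))"
proof -
  have m: "mvec M = 0" using assms(1) unfolding balanced_def mvec_def .
  have B: "Bm M i j = (if i = j then 1 / real DIM('a) else 0)" if "i \<in> Basis" "j \<in> Basis" for i j :: 'a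
    using assms(2) that unfolding isotropic_def Bm_def by auto
  have L: "Lm M j = (1 / real DIM('a)) *\<^sub>R j" if "j \<in> Basis" for j :: 'a
  proof -
    have "Lm M j = (\<Sum>k\<in>Basis. (if k = j then (1 / real DIM('a)) *\<^sub>R k else 0))"
      unfolding Lm_def using that by (intro sum.cong refl) (auto simp: B)
    then show ?thesis using that by simp
  qed
  have "Fm M = (\<Sum>j\<in>(Basis::'a set). (1 / real DIM('a))^2)"
    unfolding Fm_def by (intro sum.cong refl) (simp add: L power2_eq_square)
  also have "\<dots> = 1 / real DIM('a)" by (simp add: power2_eq_square)
  finally show ?thesis using level_x by (simp add: m Bm_def)
qed

end


lemma sphere_prob_sphp: "sphere_prob M \<Longrightarrow> sphp M"
  unfolding sphere_prob_def sphp_def sphp_axioms_def by auto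

lemma ball_pos: "emeasure lborel (ball (0::'a::euclidean_space) 1) \<noteq> 0"
proof -
  obtain a b :: 'a where ab: "box a b \<subseteq> ball 0 1" "\<forall>i\<in>Basis. a \<bullet> i < b \<bullet> i"
    by (meson open_contains_box open_ball centre_in_ball zero_less_one)
  have "0 < emeasure lborel (box a b)"
    using ab(2) unfolding emeasure_lborel_box_eq
    by (force intro!: prod_pos simp: algebra_simps inner_diff_left)
  also have "\<dots> \<le> emeasure lborel (ball (0::'a) 1)"
    using ab(1) by (intro emeasure_mono) auto
  finally show ?thesis by simp
qed

lemma ball_fin: "emeasure lborel (ball (0::'a::euclidean_space) 1) \<noteq> \<infinity>"
  using emeasure_lborel_ball_finite[of "0::'a" 1] by simp

lemma U_prob: "prob_space (uniform_measure lborel (ball (0::'a::euclidean_space) 1))"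
  by (rule prob_space_uniform_measure[OF ball_pos ball_fin])

lemma N_meas[measurable]: "(\<lambda>x::'a::euclidean_space. x /\<^sub>R norm x) \<in> borel_measurable borel"
  by measurable

lemma sigma_sphere_prob: "sphere_prob (sphere_sigma :: 'a::euclidean_space measure)"
proof -
  let ?U = "uniform_measure lborel (ball (0::'a) 1)"
  interpret U: prob_space ?U by (rule U_prob)
  have pre: "(\<lambda>x::'a. x /\<^sub>R norm x) -` sphere 0 1 = UNIV - {0}"
    by (auto simp: norm_divide)
  have z: "emeasure ?U {0} = 0"
  proof -
    have "emeasure ?U {0} = emeasure lborel (ball 0 1 \<inter> {0}) / emeasure lborel (ball (0::'a) 1)"
      by (subst emeasure_uniform_measure) auto
    also have "emeasure lborel (ball 0 1 \<inter> {0::'a}) = 0"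
      by (simp add: Int_absorb1)
    finally show ?thesis by simp
  qed
  have "emeasure ?U (UNIV - {0}) = emeasure ?U UNIV - emeasure ?U {0}"
    by (subst emeasure_Diff) (auto simp: U.emeasure_space_1[simplified])
  also have "\<dots> = 1" using z U.emeasure_space_1 by simp
  finally have e: "emeasure ?U (UNIV - {0}) = 1" .
  show ?thesis unfolding sphere_prob_def sphere_sigma_def
  proof (intro conjI)
    show "prob_space (distr ?U borel (\<lambda>x. x /\<^sub>R norm x))"
      by (rule U.prob_space_distr) simp
    show "sets (distr ?U borel (\<lambda>x. x /\<^sub>R norm x)) = sets borel" by simp
    show "emeasure (distr ?U borel (\<lambda>x. x /\<^sub>R norm x)) (sphere 0 1) = 1"
      by (subst emeasure_distr) (auto simp: pre e)
  qed
qed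

lemma lin_meas: fixes T :: "'a::euclidean_space \<Rightarrow> 'a" assumes "linear T" shows "T \<in> borel_measurable (borel :: 'a::euclidean_space measure)"
proof -
  have "bounded_linear T" using assms linear_conv_bounded_linear by auto
  then have "continuous_on UNIV T" by (rule linear_continuous_on)
  then show ?thesis by (rule borel_measurable_continuous_onI)
qed

lemma sym_U:
  fixes T :: "'a::euclidean_space \<Rightarrow> 'a"
  assumes lin: "linear T" and nT: "\<And>x. norm (T x) = norm x" and dT: "distr lborel borel T = lborel"
  shows "distr (uniform_measure lborel (ball (0::'a) 1)) borel T = uniform_measure lborel (ball 0 1)"
proof (rule measure_eqI)
  have Tm[measurable]: "T \<in> borel_measurable borel" by (rule lin_meas[OF lin])
  fix A assume "A \<in> sets (distr (uniform_measure lborel (ball (0::'a) 1)) borel T)"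
  then have A[measurable]: "A \<in> sets borel" by simp
  have eq: "ball 0 1 \<inter> T -` A = T -` (A \<inter> ball 0 1)" using nT by auto
  have TA: "T -` A \<in> sets borel" using measurable_sets_borel[OF Tm A] .
  have "emeasure lborel (T -` (A \<inter> ball 0 1)) = emeasure (distr lborel borel T) (A \<inter> ball 0 1)"
    by (subst emeasure_distr) auto
  also have "\<dots> = emeasure lborel (A \<inter> ball 0 1)" by (simp add: dT)
  finally have e2: "emeasure lborel (T -` (A \<inter> ball 0 1)) = emeasure lborel (A \<inter> ball 0 1)" .
  show "emeasure (distr (uniform_measure lborel (ball (0::'a) 1)) borel T) A = emeasure (uniform_measure lborel (ball 0 1)) A"
  proof -
    have "emeasure (distr (uniform_measure lborel (ball (0::'a) 1)) borel T) A
       = emeasure (uniform_measure lborel (ball (0::'a) 1)) (T -` A)"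
      by (subst emeasure_distr) auto
    also have "\<dots> = emeasure lborel (ball 0 1 \<inter> T -` A) / emeasure lborel (ball (0::'a) 1)"
      using TA by (subst emeasure_uniform_measure) auto
    also have "\<dots> = emeasure lborel (A \<inter> ball 0 1) / emeasure lborel (ball (0::'a) 1)"
      unfolding eq e2 ..
    also have "\<dots> = emeasure (uniform_measure lborel (ball 0 1)) A"
      by (subst emeasure_uniform_measure) (auto simp: Int_commute)
    finally show ?thesis .
  qed
qed simp

lemma sym_sigma:
  fixes T :: "'a::euclidean_space \<Rightarrow> 'a"
  assumes lin: "linear T" and nT: "\<And>x. norm (T x) = norm x" and dT: "distr lborel borel T = lborel"
  shows "distr sphere_sigma borel T = (sphere_sigma :: 'a measure)"
proof -
  let ?U = "uniform_measure lborel (ball (0::'a) 1)"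
  let ?N = "\<lambda>x::'a. x /\<^sub>R norm x"
  have Tm[measurable]: "T \<in> borel_measurable borel" by (rule lin_meas[OF lin])
  have c: "T \<circ> ?N = ?N \<circ> T"
    by (auto simp: nT linear_cmul[OF lin])
  have "distr sphere_sigma borel T = distr ?U borel (T \<circ> ?N)"
    unfolding sphere_sigma_def by (subst distr_distr) auto
  also have "\<dots> = distr ?U borel (?N \<circ> T)" by (simp add: c)
  also have "\<dots> = distr (distr ?U borel T) borel ?N"
    by (subst distr_distr) auto
  also have "\<dots> = sphere_sigma" unfolding sphere_sigma_def sym_U[OF assms] ..
  finally show ?thesis .
qed

lemma sym_int:
  fixes T :: "'a::euclidean_space \<Rightarrow> 'a" and h :: "'a \<Rightarrow> 'b::{banach,second_countable_topology}"
  assumes lin: "linear T" and nT: "\<And>x. norm (T x) = norm x" and dT: "distr lborel borel T = lborel"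
    and h: "h \<in> borel_measurable borel"
  shows "(\<integral>x. h (T x) \<partial>sphere_sigma) = (\<integral>x. h x \<partial>sphere_sigma)"
proof -
  have Tm[measurable]: "T \<in> borel_measurable sphere_sigma"
    using lin_meas[OF lin] by (simp add: sphere_sigma_def)
  have "(\<integral>x. h x \<partial>sphere_sigma) = (\<integral>x. h x \<partial>distr sphere_sigma borel T)"
    by (simp add: sym_sigma[OF assms(1-3)])
  also have "\<dots> = (\<integral>x. h (T x) \<partial>sphere_sigma)"
    by (rule integral_distr[OF Tm h])
  finally show ?thesis ..
qed



lemma lborel_uminus: "distr lborel borel uminus = (lborel :: 'a::euclidean_space measure)"
proof -
  have "(lborel :: 'a measure) = density (distr lborel borel (\<lambda>x. 0 + (-1::real) *\<^sub>R x)) (\<lambda>_. \<bar>-1::real\<bar>^DIM('a))"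
    by (rule lborel_affine) simp
  also have "(\<lambda>x::'a. 0 + (-1::real) *\<^sub>R x) = uminus" by auto
  finally show ?thesis by (simp add: density_1)
qed

definition refl_at :: "'a::euclidean_space \<Rightarrow> 'a \<Rightarrow> 'a" where
  "refl_at i x = x - (2 * (x \<bullet> i)) *\<^sub>R i"

lemma refl_at_inner: "i \<in> Basis \<Longrightarrow> b \<in> Basis \<Longrightarrow> refl_at i x \<bullet> b = (if b = i then - (x \<bullet> b) else x \<bullet> b)"
  by (auto simp: refl_at_def inner_diff_left inner_Basis)

lemma refl_at_linear: "linear (refl_at i)"
  by (rule linearI) (simp_all add: refl_at_def inner_add_left algebra_simps)

lemma refl_at_norm: assumes "i \<in> Basis" shows "norm (refl_at i x) = norm x"
proof -
  have "refl_at i x \<bullet> refl_at i x = x \<bullet> x"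
    using assms by (simp add: refl_at_def inner_diff_left inner_diff_right inner_commute[of i x] algebra_simps)
  then show ?thesis by (simp add: norm_eq_sqrt_inner)
qed

lemma lborel_refl: assumes i: "i \<in> Basis"
  shows "distr lborel borel (refl_at i) = (lborel :: 'a::euclidean_space measure)"
proof -
  let ?c = "\<lambda>j::'a. if j = i then -1 else (1::real)"
  have "(lborel :: 'a measure) = density (distr lborel borel (\<lambda>x. 0 + (\<Sum>j\<in>Basis. (?c j * (x \<bullet> j)) *\<^sub>R j))) (\<lambda>_. (\<Prod>j\<in>Basis. \<bar>?c j\<bar>))"
    by (rule lborel_affine_euclidean) auto
  also have "(\<lambda>x. 0 + (\<Sum>j\<in>Basis. (?c j * (x \<bullet> j)) *\<^sub>R j)) = refl_at i"
  proof (rule ext, rule euclidean_eqI)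
    fix x b :: 'a assume b: "b \<in> Basis"
    have "(0 + (\<Sum>j\<in>Basis. (?c j * (x \<bullet> j)) *\<^sub>R j)) \<bullet> b = ?c b * (x \<bullet> b)"
      using b by (simp add: inner_sum_left inner_Basis if_distrib[of "\<lambda>t. _ * t"] cong: if_cong)
    then show "(0 + (\<Sum>j\<in>Basis. (?c j * (x \<bullet> j)) *\<^sub>R j)) \<bullet> b = refl_at i x \<bullet> b"
      using refl_at_inner[OF i b] by auto
  qed
  also have "(\<Prod>j\<in>Basis. \<bar>?c j\<bar>) = 1" by (intro prod.neutral) auto
  finally show ?thesis by (simp add: density_1)
qed

definition swp :: "'a::euclidean_space \<Rightarrow> 'a \<Rightarrow> 'a \<Rightarrow> 'a" where
  "swp i j x = x + ((x \<bullet> j) - (x \<bullet> i)) *\<^sub>R i + ((x \<bullet> i) - (x \<bullet> j)) *\<^sub>R j"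

definition pm :: "'a \<Rightarrow> 'a \<Rightarrow> 'a \<Rightarrow> 'a" where
  "pm i j b = (if b = i then j else if b = j then i else b)"

lemma swp_inner: "i \<in> Basis \<Longrightarrow> j \<in> Basis \<Longrightarrow> b \<in> Basis \<Longrightarrow> swp i j x \<bullet> b = x \<bullet> pm i j b"
  by (auto simp: swp_def pm_def inner_add_left inner_Basis algebra_simps)

lemma pm_Basis: "i \<in> Basis \<Longrightarrow> j \<in> Basis \<Longrightarrow> b \<in> Basis \<Longrightarrow> pm i j b \<in> Basis"
  by (auto simp: pm_def)

lemma pm_pm: "pm i j (pm i j b) = b"
  by (auto simp: pm_def)

lemma pm_bij: "i \<in> Basis \<Longrightarrow> j \<in> Basis \<Longrightarrow> bij_betw (pm i j) Basis Basis"
  by (rule bij_betw_byWitness[where f'="pm i j"]) (auto simp: pm_pm pm_Basis)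

lemma swp_linear: "linear (swp i j)"
  by (rule linearI) (simp_all add: swp_def inner_add_left algebra_simps)

lemma swp_norm: assumes "i \<in> Basis" "j \<in> Basis" shows "norm (swp i j x) = norm x"
proof -
  have "swp i j x \<bullet> swp i j x = (\<Sum>b\<in>Basis. (x \<bullet> pm i j b) * (x \<bullet> pm i j b))"
    by (subst euclidean_inner) (simp add: swp_inner assms)
  also have "\<dots> = (\<Sum>b\<in>Basis. (x \<bullet> b) * (x \<bullet> b))"
    using sum.reindex_bij_betw[OF pm_bij[OF assms], of "\<lambda>b. (x \<bullet> b) * (x \<bullet> b)"] by simp
  also have "\<dots> = x \<bullet> x" by (simp add: euclidean_inner[symmetric])
  finally show ?thesis by (simp add: norm_eq_sqrt_inner)
qed

lemma lborel_swp: assumes ij: "i \<in> Basis" "j \<in> Basis"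
  shows "distr lborel borel (swp i j) = (lborel :: 'a::euclidean_space measure)"
proof (rule lborel_eqI[symmetric])
  have Tm[measurable]: "swp i j \<in> borel_measurable (borel :: 'a measure)" by (rule lin_meas[OF swp_linear])
  fix l u :: 'a assume le: "\<And>b. b \<in> Basis \<Longrightarrow> l \<bullet> b \<le> u \<bullet> b"
  have pre: "swp i j -` box l u = box (swp i j l) (swp i j u)"
  proof (intro set_eqI iffI)
    fix x assume "x \<in> swp i j -` box l u"
    then have h: "\<And>b. b \<in> Basis \<Longrightarrow> l \<bullet> b < x \<bullet> pm i j b \<and> x \<bullet> pm i j b < u \<bullet> b"
      by (auto simp: mem_box swp_inner ij)
    show "x \<in> box (swp i j l) (swp i j u)"
      unfolding mem_box
    proof (intro ballI)
      fix b :: 'a assume b: "b \<in> Basis"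
      show "swp i j l \<bullet> b < x \<bullet> b \<and> x \<bullet> b < swp i j u \<bullet> b"
        using h[OF pm_Basis[OF ij b]] b ij by (simp add: swp_inner pm_pm)
    qed
  next
    fix x assume "x \<in> box (swp i j l) (swp i j u)"
    then have h: "\<And>b. b \<in> Basis \<Longrightarrow> l \<bullet> pm i j b < x \<bullet> b \<and> x \<bullet> b < u \<bullet> pm i j b"
      by (auto simp: mem_box swp_inner ij)
    show "x \<in> swp i j -` box l u"
      unfolding mem_box vimage_eq
    proof (intro ballI)
      fix b :: 'a assume b: "b \<in> Basis"
      show "l \<bullet> b < swp i j x \<bullet> b \<and> swp i j x \<bullet> b < u \<bullet> b"
        using h[OF pm_Basis[OF ij b]] b ij by (simp add: swp_inner pm_pm)
    qed
  qed
  have le2: "\<And>b. b \<in> Basis \<Longrightarrow> swp i j l \<bullet> b \<le> swp i j u \<bullet> b"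
    using le ij by (simp add: swp_inner pm_Basis)
  have "emeasure (distr lborel borel (swp i j)) (box l u) = emeasure lborel (box (swp i j l) (swp i j u))"
    by (subst emeasure_distr) (auto simp: pre)
  also have "\<dots> = (\<Prod>b\<in>Basis. (swp i j u - swp i j l) \<bullet> b)"
    using le2 by (simp add: emeasure_lborel_box)
  also have "\<dots> = (\<Prod>b\<in>Basis. (u - l) \<bullet> pm i j b)"
    using ij by (intro arg_cong[where f=ennreal] prod.cong refl) (simp add: inner_diff_left swp_inner)
  also have "\<dots> = (\<Prod>b\<in>Basis. (u - l) \<bullet> b)"
    using prod.reindex_bij_betw[OF pm_bij[OF ij], of "\<lambda>b. (u - l) \<bullet> b"] by simp
  finally show "emeasure (distr lborel borel (swp i j)) (box l u) = (\<Prod>b\<in>Basis. (u - l) \<bullet> b)" .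
qed simp



lemma sigma_balanced: "balanced (sphere_sigma :: 'a::euclidean_space measure)"
proof -
  have lin: "linear (uminus :: 'a \<Rightarrow> 'a)" by (rule linearI) auto
  have "(\<integral>x. - x \<partial>sphere_sigma) = (\<integral>x. x \<partial>(sphere_sigma :: 'a measure))"
    using sym_int[OF lin _ lborel_uminus, of "\<lambda>x. x"] by simp
  then have "- (\<integral>x. x \<partial>(sphere_sigma :: 'a measure)) = (\<integral>x. x \<partial>sphere_sigma)" by simp
  then have "(\<integral>x. x \<partial>(sphere_sigma :: 'a measure)) + (\<integral>x. x \<partial>sphere_sigma) = 0"
    by (metis add.left_inverse)
  then have "(2::real) *\<^sub>R (\<integral>x. x \<partial>(sphere_sigma :: 'a measure)) = 0" by (simp add: scaleR_2)
  then show ?thesis unfolding balanced_def by simp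
qed

lemma sigma_isotropic:
  assumes "DIM('a::euclidean_space) \<ge> 2"
  shows "isotropic (sphere_sigma :: 'a measure)"
  unfolding isotropic_def
proof (intro ballI)
  interpret sphp "sphere_sigma :: 'a measure" by (rule sphere_prob_sphp[OF sigma_sphere_prob])
  fix i j :: 'a assume i: "i \<in> Basis" and j: "j \<in> Basis"
  show "(\<integral>x. (x \<bullet> i) * (x \<bullet> j) \<partial>sphere_sigma) = (if i = j then 1 / real DIM('a) else 0)"
  proof (cases "i = j")
    case False
    have "(\<integral>x. (refl_at i x \<bullet> i) * (refl_at i x \<bullet> j) \<partial>sphere_sigma) = (\<integral>x. (x \<bullet> i) * (x \<bullet> j) \<partial>(sphere_sigma :: 'a measure))"
      by (rule sym_int[OF refl_at_linear refl_at_norm[OF i] lborel_refl[OF i]]) measurable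
    moreover have "\<And>x. (refl_at i x \<bullet> i) * (refl_at i x \<bullet> j) = - ((x \<bullet> i) * (x \<bullet> j))"
      using False by (simp add: refl_at_inner i j)
    ultimately have "- (\<integral>x. (x \<bullet> i) * (x \<bullet> j) \<partial>(sphere_sigma :: 'a measure)) = (\<integral>x. (x \<bullet> i) * (x \<bullet> j) \<partial>sphere_sigma)"
      by simp
    then show ?thesis using False by simp
  next
    case True
    have eqk: "Bm sphere_sigma k k = Bm sphere_sigma i i" if k: "k \<in> Basis" for k :: 'a
    proof -
      have "(\<integral>x. (swp i k x \<bullet> k) * (swp i k x \<bullet> k) \<partial>sphere_sigma) = (\<integral>x. (x \<bullet> k) * (x \<bullet> k) \<partial>(sphere_sigma :: 'a measure))"
        by (rule sym_int[OF swp_linear swp_norm[OF i k] lborel_swp[OF i k]]) measurable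
      moreover have "\<And>x. (swp i k x \<bullet> k) * (swp i k x \<bullet> k) = (x \<bullet> i) * (x \<bullet> i)"
        by (simp add: swp_inner i k pm_def)
      ultimately show ?thesis unfolding Bm_def by simp
    qed
    have "1 = (\<Sum>k\<in>(Basis::'a set). Bm sphere_sigma k k)" using trace1 by simp
    also have "\<dots> = real DIM('a) * Bm sphere_sigma i i" by (simp add: eqk)
    finally have "Bm sphere_sigma i i = 1 / real DIM('a)"
      by (simp add: field_simps)
    then show ?thesis using True by (simp add: Bm_def)
  qed
qed

theorem theorem4p4:
  assumes "DIM('a::euclidean_space) \<ge> 2"
  shows "sphere_prob (sphere_sigma :: 'a measure) \<and>
         (\<forall>\<mu>::'a measure. sphere_prob \<mu> \<longrightarrow> I_A2 \<mu> \<le> I_A2 (sphere_sigma :: 'a measure)) \<and>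
         (\<forall>\<mu>::'a measure. sphere_prob \<mu> \<and> balanced \<mu> \<and> isotropic \<mu> \<longrightarrow>
            (\<forall>\<nu>::'a measure. sphere_prob \<nu> \<longrightarrow> I_A2 \<nu> \<le> I_A2 \<mu>))"
proof -
  have S: "I_A2 (sphere_sigma :: 'a measure) = 3/4 - 3/4 * (1 / real DIM('a))"
    using sphp.I_eq[OF sphere_prob_sphp[OF sigma_sphere_prob] sigma_balanced sigma_isotropic[OF assms]] .
  show ?thesis
  proof (intro conjI allI impI)
    show "sphere_prob (sphere_sigma :: 'a measure)" by (rule sigma_sphere_prob)
  next
    fix \<mu> :: "'a measure" assume "sphere_prob \<mu>"
    then show "I_A2 \<mu> \<le> I_A2 (sphere_sigma :: 'a measure)"
      using sphp.I_le[OF sphere_prob_sphp] S by simp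
  next
    fix \<mu> \<nu> :: "'a measure" assume h: "sphere_prob \<mu> \<and> balanced \<mu> \<and> isotropic \<mu>" "sphere_prob \<nu>"
    have "I_A2 \<mu> = 3/4 - 3/4 * (1 / real DIM('a))"
      using h(1) sphp.I_eq[OF sphere_prob_sphp[of \<mu>]] by blast
    then show "I_A2 \<nu> \<le> I_A2 \<mu>"
      using sphp.I_le[OF sphere_prob_sphp[OF h(2)]] by simp
  qed
qed

end
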